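(* Let $\mathcal A:=\{x\in\mathbb X:\mathcal R_{(x,0)}=\mathbb S\}$. (i) If $x\in\mathbb X$ satisfies $\mathbb P_{(x,0)}(X_n\in\mathcal A\text{ for infinitely many }n)=1$, then $x\in\mathcal A$. (ii) If $(X_n)_n$ is Harris recurrent and $\mathcal R_{(\pi,0)}=\mathbb S$, then $\mathcal A=\mathbb X$, and hence $\mathcal R_{(\mu,0)}=\mathbb S$ for every initial distribution $\mu$.
   Context: $(\mathbb X,\mathcal X)$ is a measurable space. A Markov random walk (MRW) on $\mathbb X\times\mathbb R^2$ is a Markov chain $(X_n,S_n)_{n\ge0}$ with values in $\mathbb X\times\mathbb R^2$ whose transition kernel $P$ satisfies $P((x,s);A\times S)=P((x,0);A\times(S-s))$ for all $(x,s)\in\mathbb X\times\mathbb R^2$, $A\in\mathcal X$ and Borel $S\subset\mathbb R^2$; then $(X_n)_n$ is itself a Markov chain (the driving chain), with transition kernel denoted $Q$. One always takes $S_0=0$. For a probability measure $\mu$ on $\mathbb X$, $\mathbb P_{(\mu,0)}$ is the law of the chain with $X_0\sim\mu$, $S_0=0$; $\mathbb P_{(x,0)}:=\mathbb P_{(\delta_x,0)}$. Standing assumptions: $Q$ has an invariant probability measure $\pi$; $S_1$ is $\mathbb P_{(\pi,0)}$-integrable with $\mathbb E_{(\pi,0)}[S_1]=0$; there is a two-dimensional closed subgroup $\mathbb S$ of $\mathbb R^2$ with $\mathbb P_{(x,0)}(S_n\in\mathbb S)=1$ for all $x\in\mathbb X$, $n\ge0$. The recurrence set is $\mathcal R_{(\mu,0)}:=\{s\in\mathbb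 S:\ \forall\varepsilon>0,\ \mathbb P_{(\mu,0)}(|S_n-s|<\varepsilon\text{ for infinitely many }n)=1\}$, $\mathcal R_{(x,0)}:=\mathcal R_{(\delta_x,0)}$. $(X_n)_n$ is Harris recurrent if for every $B\in\mathcal X$ with $\pi(B)>0$ and every $x$, $\mathbb P_{(x,0)}(X_k\in B\text{ i.o.})=1$. *)

theory Defs
  imports "HOL-Probability.Probability"
begin

text \<open>A chain with transition kernel \<open>P\<close> is described by the family \<open>L\<close> of its path laws
  \<open>L z\<close> (law of \<open>(Z\<^sub>n)\<^sub>n\<close> on the stream space, started at \<open>Z\<^sub>0 = z\<close>), characterised by the
  Markov property: the first step is drawn from \<open>P z\<close>, then the chain restarts.\<close>

definition markov_law ::
  "('s \<Rightarrow> 's measure) \<Rightarrow> 's measure \<Rightarrow> ('s \<Rightarrow> 's stream measure) \<Rightarrow> bool" where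
  "markov_law K N L \<longleftrightarrow>
     L \<in> N \<rightarrow>\<^sub>M prob_algebra (stream_space N) \<and>
     (\<forall>z\<in>space N. L z = K z \<bind> (\<lambda>t. distr (L t) (stream_space N) (\<lambda>\<omega>. z ## \<omega>)))"

definition MRW_kernel :: "'a measure \<Rightarrow> ('a \<times> (real^2) \<Rightarrow> ('a \<times> (real^2)) measure) \<Rightarrow> bool" where
  "MRW_kernel M P \<longleftrightarrow>
     P \<in> M \<Otimes>\<^sub>M (borel :: (real^2) measure) \<rightarrow>\<^sub>M prob_algebra (M \<Otimes>\<^sub>M borel) \<and>
     (\<forall>x\<in>space M. \<forall>s. \<forall>A\<in>sets M. \<forall>B\<in>sets (borel :: (real^2) measure).
        emeasure (P (x, s)) (A \<times> B) = emeasure (P (x, 0)) (A \<times> ((\<lambda>t. t - s) ` B)))"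

definition drive_kernel :: "'a measure \<Rightarrow> ('a \<times> (real^2) \<Rightarrow> ('a \<times> (real^2)) measure) \<Rightarrow> 'a \<Rightarrow> 'a measure" where
  "drive_kernel M P x = distr (P (x, 0)) M fst"

definition invariant_prob :: "'a measure \<Rightarrow> ('a \<Rightarrow> 'a measure) \<Rightarrow> 'a measure \<Rightarrow> bool" where
  "invariant_prob M Q \<pi> \<longleftrightarrow> prob_space \<pi> \<and> sets \<pi> = sets M \<and>
     (\<forall>A\<in>sets M. (\<integral>\<^sup>+ x. emeasure (Q x) A \<partial>\<pi>) = emeasure \<pi> A)"

definition closed_subgroup_2d :: "(real^2) set \<Rightarrow> bool" where
  "closed_subgroup_2d G \<longleftrightarrow> closed G \<and> 0 \<in> G \<and> (\<forall>a\<in>G. \<forall>b\<in>G. a - b \<in> G) \<and> span G = UNIV"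

definition init_law :: "('a \<times> (real^2) \<Rightarrow> ('a \<times> (real^2)) stream measure) \<Rightarrow> 'a measure
     \<Rightarrow> ('a \<times> (real^2)) stream measure" where
  "init_law L \<mu> = \<mu> \<bind> (\<lambda>x. L (x, 0))"

definition Xn :: "nat \<Rightarrow> ('a \<times> (real^2)) stream \<Rightarrow> 'a" where "Xn n \<omega> = fst (\<omega> !! n)"
definition Sn :: "nat \<Rightarrow> ('a \<times> (real^2)) stream \<Rightarrow> real^2" where "Sn n \<omega> = snd (\<omega> !! n)"

definition rec_set :: "(real^2) set \<Rightarrow> ('a \<times> (real^2)) stream measure \<Rightarrow> (real^2) set" where
  "rec_set G Pr = {s \<in> G. \<forall>\<epsilon>>0.
      measure Pr {\<omega> \<in> space Pr. infinite {n. norm (Sn n \<omega> - s) < \<epsilon>}} = 1}"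

definition harris_recurrent ::
  "'a measure \<Rightarrow> ('a \<times> (real^2) \<Rightarrow> ('a \<times> (real^2)) stream measure) \<Rightarrow> 'a measure \<Rightarrow> bool" where
  "harris_recurrent M L \<pi> \<longleftrightarrow>
     (\<forall>B\<in>sets M. measure \<pi> B > 0 \<longrightarrow> (\<forall>x\<in>space M.
        measure (init_law L (return M x)) {\<omega> \<in> space (init_law L (return M x)). infinite {k. Xn k \<omega> \<in> B}} = 1))"

end

theory Submission
  imports Defs
begin

locale mrw_setup =
  fixes M :: "'a measure" and P :: "'a \<times> (real^2) \<Rightarrow> ('a \<times> (real^2)) measure"
    and L :: "'a \<times> (real^2) \<Rightarrow> ('a \<times> (real^2)) stream measure"
  assumes mrw: "MRW_kernel M P" and chain: "markov_law P (M \<Otimes>\<^sub>M borel) L"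
begin

abbreviation "N \<equiv> M \<Otimes>\<^sub>M (borel :: (real^2) measure)"
abbreviation "\<Omega> \<equiv> stream_space N"

lemma P_meas[measurable]: "P \<in> N \<rightarrow>\<^sub>M prob_algebra N"
  using mrw unfolding MRW_kernel_def by blast
lemma L_meas[measurable]: "L \<in> N \<rightarrow>\<^sub>M prob_algebra \<Omega>"
  using chain unfolding markov_law_def by blast
lemma L_eq: "z \<in> space N \<Longrightarrow> L z = P z \<bind> (\<lambda>t. distr (L t) \<Omega> (\<lambda>\<omega>. z ## \<omega>))"
  using chain unfolding markov_law_def by blast

definition Tr :: "real^2 \<Rightarrow> 'a \<times> (real^2) \<Rightarrow> 'a \<times> (real^2)" where
  "Tr t = (\<lambda>(y,s). (y, s + t))"

lemma Tr_meas[measurable]: "Tr t \<in> N \<rightarrow>\<^sub>M N"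
  unfolding Tr_def by measurable

lemma P_space: "z \<in> space N \<Longrightarrow> prob_space (P z) \<and> sets (P z) = sets N"
  using measurable_space[OF P_meas] by (auto simp: space_prob_algebra)
lemma L_space: "z \<in> space N \<Longrightarrow> prob_space (L z) \<and> sets (L z) = sets \<Omega>"
  using measurable_space[OF L_meas] by (auto simp: space_prob_algebra)

lemma sets_P: "z \<in> space N \<Longrightarrow> sets (P z) = sets N" using P_space by blast
lemma space_P: "z \<in> space N \<Longrightarrow> space (P z) = space N" using sets_P sets_eq_imp_space_eq by blast
lemma prob_P: "z \<in> space N \<Longrightarrow> prob_space (P z)" using P_space by blast
lemma sets_L: "z \<in> space N \<Longrightarrow> sets (L z) = sets \<Omega>" using L_space by blast
lemma space_L: "z \<in> space N \<Longrightarrow> space (L z) = space \<Omega>" using sets_L sets_eq_imp_space_eq by blast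
lemma prob_L: "z \<in> space N \<Longrightarrow> prob_space (L z)" using L_space by blast

lemma P_Tr0:
  assumes x: "x \<in> space M"
  shows "P (x, s) = distr (P (x, 0)) N (Tr s)"
proof (rule measure_eqI_generator_eq[OF Int_stable_pair_measure_generator[of M borel]])
  have xs: "(x,s) \<in> space N" "(x,0) \<in> space N" using x by (auto simp: space_pair_measure)
  show "{a \<times> b |a b. a \<in> sets M \<and> b \<in> sets borel} \<subseteq> Pow (space M \<times> space borel)"
    using sets.sets_into_space by fastforce
  show "sets (P (x, s)) = sigma_sets (space M \<times> space borel) {a \<times> b |a b. a \<in> sets M \<and> b \<in> sets borel}"
    using P_space[OF xs(1)] by (simp add: sets_pair_measure)
  show "sets (distr (P (x, 0)) N (Tr s)) = sigma_sets (space M \<times> space borel) {a \<times> b |a b. a \<in> sets M \<and> b \<in> sets borel}"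
    by (simp add: sets_pair_measure)
  fix X assume "X \<in> {a \<times> b |a b. a \<in> sets M \<and> b \<in> sets (borel :: (real^2) measure)}"
  then obtain A B where X: "X = A \<times> B" "A \<in> sets M" "B \<in> sets (borel :: (real^2) measure)" by auto
  have pre: "Tr s -` X \<inter> space N = A \<times> ((\<lambda>t. t - s) ` B)"
    using X sets.sets_into_space[OF X(2)]
    by (auto simp: Tr_def space_pair_measure image_iff) (metis add_diff_cancel)
  have "emeasure (distr (P (x, 0)) N (Tr s)) X = emeasure (P (x,0)) (Tr s -` X \<inter> space (P (x,0)))"
    apply (rule emeasure_distr)
    apply (subst measurable_cong_sets[OF sets_P[OF xs(2)] refl], rule Tr_meas)
    using X by auto
  also have "space (P (x,0)) = space N" using P_space[OF xs(2)] sets_eq_imp_space_eq by blast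
  also note pre
  also have "emeasure (P (x,0)) (A \<times> ((\<lambda>t. t - s) ` B)) = emeasure (P (x,s)) X"
    using mrw x X unfolding MRW_kernel_def by auto
  finally show "emeasure (P (x, s)) X = emeasure (distr (P (x, 0)) N (Tr s)) X" by simp
next
  show "range (\<lambda>_. space M \<times> space borel) \<subseteq> {a \<times> b |a b. a \<in> sets M \<and> b \<in> sets (borel :: (real^2) measure)}"
    by blast
  show "(\<Union>i. space M \<times> space (borel :: (real^2) measure)) = space M \<times> space borel" by simp
  have "(x,s) \<in> space N" using x by (auto simp: space_pair_measure)
  then interpret prob_space "P (x,s)" using P_space by blast
  show "\<And>i. emeasure (P (x, s)) (space M \<times> space borel) \<noteq> \<infinity>" by simp
qed

lemma Tr_space: "z \<in> space N \<Longrightarrow> Tr t z \<in> space N"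
  using measurable_space[OF Tr_meas] by blast
lemma Tr_Tr: "Tr t (Tr s z) = Tr (s + t) z"
  by (cases z) (simp add: Tr_def add.assoc)
lemma Tr_inv: "Tr t (Tr (-t) z) = z" "Tr (-t) (Tr t z) = z"
  by (cases z, simp add: Tr_def)+

lemma P_Tr:
  assumes z: "z \<in> space N"
  shows "P (Tr t z) = distr (P z) N (Tr t)"
proof -
  obtain x s where zs: "z = (x,s)" by (cases z)
  have x: "x \<in> space M" using z zs by (auto simp: space_pair_measure)
  have "P (Tr t z) = P (x, s + t)" by (simp add: zs Tr_def)
  also have "\<dots> = distr (P (x, 0)) N (Tr (s + t))" by (rule P_Tr0[OF x])
  also have "\<dots> = distr (distr (P (x, 0)) N (Tr s)) N (Tr t)"
  proof -
    have x0: "(x,0) \<in> space N" using x by (auto simp: space_pair_measure)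
    have m: "Tr s \<in> P (x,0) \<rightarrow>\<^sub>M N"
      by (subst measurable_cong_sets[OF sets_P[OF x0] refl], rule Tr_meas)
    show ?thesis by (subst distr_distr[OF Tr_meas m]) (simp add: comp_def Tr_Tr)
  qed
  also have "distr (P (x, 0)) N (Tr s) = P z" using P_Tr0[OF x, of s] zs by simp
  finally show ?thesis .
qed

lemma meas_Stream_const[measurable]: "y \<in> space N \<Longrightarrow> (\<lambda>\<omega>. y ## \<omega>) \<in> \<Omega> \<rightarrow>\<^sub>M \<Omega>"
  by measurable

lemma L_distr:
  assumes y: "y \<in> space N"
  shows "L y = distr (P y \<bind> L) \<Omega> (\<lambda>\<omega>. y ## \<omega>)"
proof -
  have "distr (P y \<bind> L) \<Omega> (\<lambda>\<omega>. y ## \<omega>) = P y \<bind> (\<lambda>w. distr (L w) \<Omega> (\<lambda>\<omega>. y ## \<omega>))"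
  proof (rule distr_bind)
    show "L \<in> P y \<rightarrow>\<^sub>M subprob_algebra \<Omega>"
      by (subst measurable_cong_sets[OF sets_P[OF y] refl]) (rule measurable_prob_algebraD[OF L_meas])
    show "space (P y) \<noteq> {}" using prob_space.not_empty[OF prob_P[OF y]] .
    show "(\<lambda>\<omega>. y ## \<omega>) \<in> \<Omega> \<rightarrow>\<^sub>M \<Omega>" using y by measurable
  qed
  then show ?thesis using L_eq[OF y] by simp
qed

lemma bind_ret_distr:
  assumes "sets X = sets \<Omega>" "prob_space X" "f \<in> \<Omega> \<rightarrow>\<^sub>M \<Omega>"
  shows "X \<bind> (\<lambda>\<omega>. return \<Omega> (f \<omega>)) = distr X \<Omega> f"
  apply (rule bind_return_distr')
  using assms prob_space.not_empty apply blast
  using assms(1,3) measurable_cong_sets[OF assms(1) refl] by blast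

lemma PL_meas[measurable]: "(\<lambda>y. P y \<bind> L) \<in> N \<rightarrow>\<^sub>M prob_algebra \<Omega>"
  by (rule measurable_bind_prob_space[OF P_meas L_meas])

lemma PL_space: "y \<in> space N \<Longrightarrow> sets (P y \<bind> L) = sets \<Omega> \<and> prob_space (P y \<bind> L)"
  using measurable_space[OF PL_meas] by (auto simp: space_prob_algebra)

lemma L_ret: "y \<in> space N \<Longrightarrow> L y = (P y \<bind> L) \<bind> (\<lambda>\<omega>. return \<Omega> (y ## \<omega>))"
  by (subst bind_ret_distr) (use PL_space in \<open>auto simp: L_distr\<close>)

lemma L_Tr:
  assumes z: "z \<in> space N"
  shows "L (Tr t z) = distr (L z) \<Omega> (smap (Tr t))"
proof -
  define D where "D w = distr (L w) \<Omega> (smap (Tr t))" for w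
  have sm: "smap (Tr t) \<in> \<Omega> \<rightarrow>\<^sub>M \<Omega>" by measurable
  have D_meas[measurable]: "D \<in> N \<rightarrow>\<^sub>M prob_algebra \<Omega>"
    unfolding D_def by (rule measurable_compose[OF L_meas measurable_distr_prob_space[OF sm]])
  have LT_meas[measurable]: "(\<lambda>z. L (Tr t z)) \<in> N \<rightarrow>\<^sub>M prob_algebra \<Omega>"
    by (rule measurable_compose[OF Tr_meas L_meas])
  have PT_meas[measurable]: "(\<lambda>z. P (Tr (-t) z)) \<in> N \<rightarrow>\<^sub>M prob_algebra N"
    by (rule measurable_compose[OF Tr_meas P_meas])
  have B'_meas[measurable]: "(\<lambda>y. P (Tr (-t) y) \<bind> D) \<in> N \<rightarrow>\<^sub>M prob_algebra \<Omega>"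
    by (rule measurable_bind_prob_space[OF PT_meas D_meas])
  have ret_meas[measurable]: "(\<lambda>(y, \<omega>). return \<Omega> (y ## \<omega>)) \<in> N \<Otimes>\<^sub>M \<Omega> \<rightarrow>\<^sub>M prob_algebra \<Omega>"
    by measurable
  have DPL: "P z \<bind> D = distr (P z \<bind> L) \<Omega> (smap (Tr t))" if z: "z \<in> space N" for z
    unfolding D_def
  proof (rule distr_bind[symmetric])
    show "L \<in> P z \<rightarrow>\<^sub>M subprob_algebra \<Omega>"
      by (subst measurable_cong_sets[OF sets_P[OF z] refl]) (rule measurable_prob_algebraD[OF L_meas])
    show "space (P z) \<noteq> {}" using prob_space.not_empty[OF prob_P[OF z]] .
  qed (rule sm)
  define R where "R A B \<longleftrightarrow> (\<exists>\<nu>\<in>space (prob_algebra N). A = \<nu> \<bind> (\<lambda>z. L (Tr t z)) \<and> B = \<nu> \<bind> D)"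
    for A B
  show ?thesis
  proof (rule stream_space_coinduct[of R])
    have rz: "return N z \<in> space (prob_algebra N)"
      using measurable_space[OF measurable_return_prob_space z] .
    show "R (L (Tr t z)) (distr (L z) \<Omega> (smap (Tr t)))"
      unfolding R_def
      apply (rule bexI[OF _ rz])
      apply (simp add: bind_return[OF measurable_prob_algebraD[OF LT_meas] z]
         bind_return[OF measurable_prob_algebraD[OF D_meas] z] D_def)
      done
  next
    fix A B assume "R A B"
    then obtain \<nu> where \<nu>: "\<nu> \<in> space (prob_algebra N)" and A: "A = \<nu> \<bind> (\<lambda>z. L (Tr t z))"
      and B: "B = \<nu> \<bind> D" unfolding R_def by blast
    have s\<nu>: "sets \<nu> = sets N" "prob_space \<nu>" using \<nu> by (auto simp: space_prob_algebra)
    then have sp\<nu>: "space \<nu> = space N" using sets_eq_imp_space_eq by blast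
    have Tr\<nu>: "Tr t \<in> \<nu> \<rightarrow>\<^sub>M N" by (subst measurable_cong_sets[OF s\<nu>(1) refl]) (rule Tr_meas)
    have ne: "space \<nu> \<noteq> {}" using prob_space.not_empty[OF s\<nu>(2)] .
    define g where "g y = (P y \<bind> L) \<bind> (\<lambda>\<omega>. return \<Omega> (y ## \<omega>))" for y
    define h where "h y = (P (Tr (-t) y) \<bind> D) \<bind> (\<lambda>\<omega>. return \<Omega> (y ## \<omega>))" for y
    have g_meas: "g \<in> N \<rightarrow>\<^sub>M subprob_algebra \<Omega>" unfolding g_def
      by (rule measurable_prob_algebraD) measurable
    have h_meas: "h \<in> N \<rightarrow>\<^sub>M subprob_algebra \<Omega>" unfolding h_def
      by (rule measurable_prob_algebraD) measurable
    show "\<exists>K\<in>space (prob_algebra N).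
      \<exists>A'\<in>N \<rightarrow>\<^sub>M prob_algebra \<Omega>. \<exists>B'\<in>N \<rightarrow>\<^sub>M prob_algebra \<Omega>.
      (AE y in K. R (A' y) (B' y) \<or> A' y = B' y) \<and>
      A = K \<bind> (\<lambda>y. A' y \<bind> (\<lambda>\<omega>. return \<Omega> (y ## \<omega>))) \<and>
      B = K \<bind> (\<lambda>y. B' y \<bind> (\<lambda>\<omega>. return \<Omega> (y ## \<omega>)))"
    proof -
      have K: "distr \<nu> N (Tr t) \<in> space (prob_algebra N)"
        using measurable_space[OF measurable_distr_prob_space[OF Tr_meas] \<nu>] .
      have AE: "AE y in distr \<nu> N (Tr t). R (P y \<bind> L) (P (Tr (-t) y) \<bind> D) \<or> P y \<bind> L = P (Tr (-t) y) \<bind> D"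
      proof -
        have "R (P y \<bind> L) (P (Tr (-t) y) \<bind> D)" if y: "y \<in> space N" for y
        proof -
        have y': "Tr (-t) y \<in> space N" using Tr_space[OF y] .
        have "P y = distr (P (Tr (-t) y)) N (Tr t)"
          using P_Tr[OF y', of t] by (simp add: Tr_inv)
        moreover have "distr (P (Tr (-t) y)) N (Tr t) \<bind> L = P (Tr (-t) y) \<bind> (\<lambda>z. L (Tr t z))"
        proof (rule bind_distr)
          show "Tr t \<in> P (Tr (-t) y) \<rightarrow>\<^sub>M N"
            by (subst measurable_cong_sets[OF sets_P[OF y'] refl]) (rule Tr_meas)
          show "L \<in> N \<rightarrow>\<^sub>M subprob_algebra \<Omega>" by (rule measurable_prob_algebraD[OF L_meas])
          show "space (P (Tr (- t) y)) \<noteq> {}" using prob_space.not_empty[OF prob_P[OF y']] .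
        qed
        ultimately show "R (P y \<bind> L) (P (Tr (-t) y) \<bind> D)"
          unfolding R_def using measurable_space[OF P_meas y'] by auto
        qed
        then show ?thesis by (intro AE_I2) auto
      qed
      have "distr \<nu> N (Tr t) \<bind> g = \<nu> \<bind> (\<lambda>z. g (Tr t z))"
        by (rule bind_distr[OF Tr\<nu> g_meas ne])
      also have "\<dots> = \<nu> \<bind> (\<lambda>z. L (Tr t z))"
        by (rule bind_cong[OF refl]) (simp add: g_def sp\<nu> L_ret[OF Tr_space])
      finally have A_eq: "A = distr \<nu> N (Tr t) \<bind> (\<lambda>y. (P y \<bind> L) \<bind> (\<lambda>\<omega>. return \<Omega> (y ## \<omega>)))"
        unfolding A g_def by simp
      have "distr \<nu> N (Tr t) \<bind> h = \<nu> \<bind> (\<lambda>z. h (Tr t z))"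
        by (rule bind_distr[OF Tr\<nu> h_meas ne])
      also have "\<dots> = \<nu> \<bind> D"
      proof (rule bind_cong[OF refl])
        fix z assume "z \<in> space \<nu>"
        then have z: "z \<in> space N" using sp\<nu> by simp
        have "h (Tr t z) = (P z \<bind> D) \<bind> (\<lambda>\<omega>. return \<Omega> (Tr t z ## \<omega>))"
          by (simp add: h_def Tr_inv)
        also have "\<dots> = distr (distr (P z \<bind> L) \<Omega> (smap (Tr t))) \<Omega> (\<lambda>\<omega>. Tr t z ## \<omega>)"
          unfolding DPL[OF z]
        proof (rule bind_ret_distr)
          have sz: "smap (Tr t) \<in> (P z \<bind> L) \<rightarrow>\<^sub>M \<Omega>"
            by (subst measurable_cong_sets[OF conjunct1[OF PL_space[OF z]] refl]) (rule sm)
          show "prob_space (distr (P z \<bind> L) \<Omega> (smap (Tr t)))"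
            by (rule prob_space.prob_space_distr[OF conjunct2[OF PL_space[OF z]] sz])
          show "(##) (Tr t z) \<in> \<Omega> \<rightarrow>\<^sub>M \<Omega>" using Tr_space[OF z] by (rule meas_Stream_const)
        qed simp
        also have "\<dots> = distr (P z \<bind> L) \<Omega> (\<lambda>\<omega>. Tr t z ## smap (Tr t) \<omega>)"
        proof -
          have sz: "smap (Tr t) \<in> (P z \<bind> L) \<rightarrow>\<^sub>M \<Omega>"
            by (subst measurable_cong_sets[OF conjunct1[OF PL_space[OF z]] refl]) (rule sm)
          show ?thesis
            by (subst distr_distr[OF meas_Stream_const[OF Tr_space[OF z]] sz]) (simp add: comp_def)
        qed
        also have "\<dots> = distr (distr (P z \<bind> L) \<Omega> (\<lambda>\<omega>. z ## \<omega>)) \<Omega> (smap (Tr t))"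
        proof -
          have sz: "(\<lambda>\<omega>. z ## \<omega>) \<in> (P z \<bind> L) \<rightarrow>\<^sub>M \<Omega>"
            by (subst measurable_cong_sets[OF conjunct1[OF PL_space[OF z]] refl]) (rule meas_Stream_const[OF z])
          show ?thesis
            by (subst distr_distr[OF sm sz]) (simp add: comp_def)
        qed
        also have "\<dots> = D z" unfolding D_def L_distr[OF z] ..
        finally show "h (Tr t z) = D z" .
      qed
      finally have B_eq: "B = distr \<nu> N (Tr t) \<bind> (\<lambda>y. (P (Tr (-t) y) \<bind> D) \<bind> (\<lambda>\<omega>. return \<Omega> (y ## \<omega>)))"
        unfolding B h_def by simp
      show ?thesis
        by (rule bexI[OF _ K], rule bexI[OF _ PL_meas], rule bexI[OF _ B'_meas]) (intro conjI AE A_eq B_eq)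
    qed
  qed
qed

definition Ev :: "real^2 \<Rightarrow> real \<Rightarrow> ('a \<times> (real^2)) stream set" where
  "Ev s \<epsilon> = {\<omega> \<in> space \<Omega>. infinite {n. norm (Sn n \<omega> - s) < \<epsilon>}}"
definition Ec :: "real^2 \<Rightarrow> real \<Rightarrow> ('a \<times> (real^2)) stream set" where
  "Ec s \<epsilon> = space \<Omega> - Ev s \<epsilon>"

lemma infinite_Suc_iff: "infinite {n. Q (Suc n)} \<longleftrightarrow> infinite {n::nat. Q n}"
proof
  assume "infinite {n. Q (Suc n)}"
  moreover have "Suc ` {n. Q (Suc n)} \<subseteq> {n. Q n}" by auto
  ultimately show "infinite {n. Q n}" using finite_imageD[of Suc] finite_subset inj_Suc
    by (metis inj_on_subset subset_UNIV)
next
  assume inf: "infinite {n. Q n}"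
  have "{n. Q n} \<subseteq> insert 0 (Suc ` {n. Q (Suc n)})"
    by (auto, metis image_eqI mem_Collect_eq not0_implies_Suc)
  then show "infinite {n. Q (Suc n)}" using inf finite_subset by blast
qed

lemma Ev_sets[measurable]: "Ev s \<epsilon> \<in> sets \<Omega>"
proof -
  have "Ev s \<epsilon> = {\<omega> \<in> space \<Omega>. \<forall>m. \<exists>n. m \<le> n \<and> norm (snd (\<omega> !! n) - s) < \<epsilon>}"
    unfolding Ev_def Sn_def infinite_nat_iff_unbounded_le by auto
  also have "\<dots> \<in> sets \<Omega>" by measurable
  finally show ?thesis .
qed
lemma Ec_sets[measurable]: "Ec s \<epsilon> \<in> sets \<Omega>"
  unfolding Ec_def by measurable

lemma stream_Cons_space: "y \<in> space N \<Longrightarrow> (y ## \<omega> \<in> space \<Omega>) = (\<omega> \<in> space \<Omega>)"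
  by (simp add: space_stream_space streams_Stream)

lemma Ev_Cons: "y \<in> space N \<Longrightarrow> (y ## \<omega> \<in> Ev s \<epsilon>) = (\<omega> \<in> Ev s \<epsilon>)"
  unfolding Ev_def Sn_def using infinite_Suc_iff[of "\<lambda>n. norm (snd ((y ## \<omega>) !! n) - s) < \<epsilon>"]
  by (simp add: stream_Cons_space)
lemma Ec_Cons: "y \<in> space N \<Longrightarrow> (y ## \<omega> \<in> Ec s \<epsilon>) = (\<omega> \<in> Ec s \<epsilon>)"
  unfolding Ec_def using Ev_Cons stream_Cons_space by blast

lemma smap_space: "\<omega> \<in> space \<Omega> \<Longrightarrow> smap (Tr t) \<omega> \<in> space \<Omega>"
  using measurable_space[OF measurable_smap[OF Tr_meas]] by blast

lemma Ec_Tr: "smap (Tr t) -` Ec s \<epsilon> \<inter> space \<Omega> = Ec (s - t) \<epsilon>"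
proof -
  have "norm (Sn n (smap (Tr t) \<omega>) - s) = norm (Sn n \<omega> - (s - t))" for n \<omega>
    by (cases "\<omega> !! n") (simp add: Sn_def Tr_def algebra_simps)
  then show ?thesis
    unfolding Ec_def Ev_def using smap_space by auto
qed

lemma L0_meas[measurable]: "(\<lambda>x. L (x, 0)) \<in> M \<rightarrow>\<^sub>M prob_algebra \<Omega>"
  by measurable

lemma init_return: "x \<in> space M \<Longrightarrow> init_law L (return M x) = L (x, 0)"
  unfolding init_law_def by (rule bind_return[OF measurable_prob_algebraD[OF L0_meas]])

lemma x0_space: "x \<in> space M \<Longrightarrow> (x, t) \<in> space N"
  by (simp add: space_pair_measure)

lemma prob1_iff:
  assumes "z \<in> space N" "A \<in> sets \<Omega>"
  shows "measure (L z) A = 1 \<longleftrightarrow> emeasure (L z) (space \<Omega> - A) = 0"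
proof -
  interpret prob_space "L z" using prob_L[OF assms(1)] .
  have sp: "space (L z) = space \<Omega>" by (rule space_L[OF assms(1)])
  have A: "A \<in> events" using assms(2) sets_L[OF assms(1)] by simp
  have "emeasure (L z) (space \<Omega> - A) = ennreal (1 - measure (L z) A)"
    using prob_compl[OF A] emeasure_eq_measure sp by simp
  then have "emeasure (L z) (space \<Omega> - A) = 0 \<longleftrightarrow> 1 - prob A \<le> 0"
    by (simp add: ennreal_eq_0_iff)
  moreover have "prob A \<le> 1" by (rule prob_le_1)
  ultimately show ?thesis by linarith
qed

lemma emeasure_L_split:
  assumes z: "z \<in> space N" and S: "S \<in> sets \<Omega>"
  shows "emeasure (L z) S = (\<integral>\<^sup>+ w. emeasure (L w) ((\<lambda>\<omega>. z ## \<omega>) -` S \<inter> space \<Omega>) \<partial>P z)"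
proof -
  have Pz: "P z \<in> space (prob_algebra N)" using measurable_space[OF P_meas z] .
  have Bm: "(\<lambda>w. distr (L w) \<Omega> (\<lambda>\<omega>. z ## \<omega>)) \<in> N \<rightarrow>\<^sub>M prob_algebra \<Omega>"
    by (rule measurable_compose[OF L_meas measurable_distr_prob_space[OF meas_Stream_const[OF z]]])
  have "emeasure (L z) S = (\<integral>\<^sup>+ w. emeasure (distr (L w) \<Omega> (\<lambda>\<omega>. z ## \<omega>)) S \<partial>P z)"
    by (subst L_eq[OF z], rule emeasure_bind_prob_algebra[OF Pz Bm S])
  also have "\<dots> = (\<integral>\<^sup>+ w. emeasure (L w) ((\<lambda>\<omega>. z ## \<omega>) -` S \<inter> space \<Omega>) \<partial>P z)"
  proof (rule nn_integral_cong)
    fix w assume "w \<in> space (P z)"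
    then have w: "w \<in> space N" using space_P[OF z] by simp
    have m: "(\<lambda>\<omega>. z ## \<omega>) \<in> L w \<rightarrow>\<^sub>M \<Omega>"
      by (subst measurable_cong_sets[OF sets_L[OF w] refl]) (rule meas_Stream_const[OF z])
    show "emeasure (distr (L w) \<Omega> (\<lambda>\<omega>. z ## \<omega>)) S = emeasure (L w) ((\<lambda>\<omega>. z ## \<omega>) -` S \<inter> space \<Omega>)"
      using emeasure_distr[OF m S] space_L[OF w] by simp
  qed
  finally show ?thesis .
qed

definition Z0 :: "real^2 \<Rightarrow> real \<Rightarrow> ('a \<times> (real^2)) set" where
  "Z0 s \<epsilon> = {z \<in> space N. emeasure (L z) (Ec s \<epsilon>) = 0}"

lemma Z0_sets[measurable]: "Z0 s \<epsilon> \<in> sets N"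
proof -
  have "(\<lambda>z. emeasure (L z) (Ec s \<epsilon>)) \<in> borel_measurable N"
    by (rule measurable_compose[OF measurable_prob_algebraD[OF L_meas] measurable_emeasure_subprob_algebra])
       (rule Ec_sets)
  then show ?thesis unfolding Z0_def by measurable
qed

lemma hit_step:
  "z \<in> space N \<Longrightarrow> emeasure (L z) (Ec s \<epsilon> \<inter> {\<omega> \<in> space \<Omega>. \<omega> !! k \<in> Z0 s \<epsilon>}) = 0"
proof (induction k arbitrary: z)
  case 0
  show ?case
  proof (cases "z \<in> Z0 s \<epsilon>")
    case True
    then have "emeasure (L z) (Ec s \<epsilon>) = 0" unfolding Z0_def by simp
    moreover have "emeasure (L z) (Ec s \<epsilon> \<inter> {\<omega> \<in> space \<Omega>. \<omega> !! 0 \<in> Z0 s \<epsilon>}) \<le> emeasure (L z) (Ec s \<epsilon>)"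
      by (rule emeasure_mono) (auto simp: sets_L[OF 0])
    ultimately show ?thesis by simp
  next
    case False
    have S: "Ec s \<epsilon> \<inter> {\<omega> \<in> space \<Omega>. \<omega> !! 0 \<in> Z0 s \<epsilon>} \<in> sets \<Omega>" by measurable
    have e: "(\<lambda>\<omega>. z ## \<omega>) -` (Ec s \<epsilon> \<inter> {\<omega> \<in> space \<Omega>. \<omega> !! 0 \<in> Z0 s \<epsilon>}) \<inter> space \<Omega> = {}"
      using False by auto
    show ?thesis using emeasure_L_split[OF 0 S] unfolding e by simp
  qed
next
  case (Suc k)
  have S: "Ec s \<epsilon> \<inter> {\<omega> \<in> space \<Omega>. \<omega> !! Suc k \<in> Z0 s \<epsilon>} \<in> sets \<Omega>" by measurable
  have pre: "(\<lambda>\<omega>. z ## \<omega>) -` (Ec s \<epsilon> \<inter> {\<omega> \<in> space \<Omega>. \<omega> !! Suc k \<in> Z0 s \<epsilon>}) \<inter> space \<Omega>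
      = Ec s \<epsilon> \<inter> {\<omega> \<in> space \<Omega>. \<omega> !! k \<in> Z0 s \<epsilon>}"
    using Ev_Cons[OF Suc.prems] stream_Cons_space[OF Suc.prems] unfolding Ec_def by auto
  have "emeasure (L z) (Ec s \<epsilon> \<inter> {\<omega> \<in> space \<Omega>. \<omega> !! Suc k \<in> Z0 s \<epsilon>})
     = (\<integral>\<^sup>+ w. emeasure (L w) (Ec s \<epsilon> \<inter> {\<omega> \<in> space \<Omega>. \<omega> !! k \<in> Z0 s \<epsilon>}) \<partial>P z)"
    using emeasure_L_split[OF Suc.prems S] unfolding pre .
  also have "\<dots> = (\<integral>\<^sup>+ w. 0 \<partial>P z)"
    by (rule nn_integral_cong) (simp add: Suc.IH space_P[OF Suc.prems])
  finally show ?case by simp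
qed

lemma Sn_meas[measurable]: "Sn n \<in> \<Omega> \<rightarrow>\<^sub>M borel"
  unfolding Sn_def by measurable

lemma part_i':
  assumes x: "x \<in> space M" and cl: "closed G" and sub: "\<forall>a\<in>G. \<forall>b\<in>G. a - b \<in> G"
    and WM: "W \<subseteq> space M" and W: "\<forall>y\<in>W. \<forall>s\<in>G. \<forall>\<epsilon>>0. measure (L (y,0)) (Ev s \<epsilon>) = 1"
    and latt: "\<forall>n. measure (L (x,0)) {\<omega>\<in>space \<Omega>. Sn n \<omega> \<in> G} = 1"
    and hyp: "measure (L (x,0)) {\<omega>\<in>space \<Omega>. infinite {n. Xn n \<omega> \<in> W}} = 1"
    and s: "s \<in> G" and e: "\<epsilon> > 0"
  shows "measure (L (x,0)) (Ev s \<epsilon>) = 1"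
proof -
  have x0: "(x,0) \<in> space N" using x by (rule x0_space)
  have inZ0: "(y,t) \<in> Z0 s \<epsilon>" if y: "y \<in> W" and t: "t \<in> G" for y t
  proof -
    have yM: "y \<in> space M" using y WM by auto
    have y0: "(y,0) \<in> space N" using yM by (rule x0_space)
    have eq: "(y,t) = Tr t (y,0)" by (simp add: Tr_def)
    have m: "smap (Tr t) \<in> L (y,0) \<rightarrow>\<^sub>M \<Omega>"
      by (subst measurable_cong_sets[OF sets_L[OF y0] refl]) measurable
    have "emeasure (L (y,t)) (Ec s \<epsilon>) = emeasure (L (y,0)) (smap (Tr t) -` Ec s \<epsilon> \<inter> space (L (y,0)))"
      unfolding eq L_Tr[OF y0] by (rule emeasure_distr[OF m Ec_sets])
    also have "\<dots> = emeasure (L (y,0)) (Ec (s - t) \<epsilon>)"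
      by (simp add: space_L[OF y0] Ec_Tr)
    also have "\<dots> = 0"
      using W y sub s t e prob1_iff[OF y0 Ev_sets[of "s - t" \<epsilon>]] unfolding Ec_def by auto
    finally show ?thesis unfolding Z0_def using x0_space[OF yM] by simp
  qed
  define I where "I = {\<omega>\<in>space \<Omega>. infinite {n. Xn n \<omega> \<in> W}}"
  have I: "I \<in> sets \<Omega>"
  proof (rule ccontr)
    assume "I \<notin> sets \<Omega>"
    then have "I \<notin> sets (L (x,0))" using sets_L[OF x0] by simp
    then have "measure (L (x,0)) I = 0" by (rule measure_notin_sets)
    then show False using hyp unfolding I_def by simp
  qed
  have I0: "emeasure (L (x,0)) (space \<Omega> - I) = 0"
    using prob1_iff[OF x0 I] hyp unfolding I_def by simp
  define Gs where "Gs n = {\<omega>\<in>space \<Omega>. Sn n \<omega> \<in> G}" for n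
  have Gb: "G \<in> sets borel" using cl by (rule borel_closed)
  have Gs: "Gs n \<in> sets \<Omega>" for n unfolding Gs_def using Gb by measurable
  have Gs0: "emeasure (L (x,0)) (space \<Omega> - Gs n) = 0" for n
    using prob1_iff[OF x0 Gs] latt unfolding Gs_def by simp
  define H where "H k = Ec s \<epsilon> \<inter> {\<omega> \<in> space \<Omega>. \<omega> !! k \<in> Z0 s \<epsilon>}" for k
  have H: "H k \<in> sets \<Omega>" for k unfolding H_def by measurable
  have H0: "emeasure (L (x,0)) (H k) = 0" for k unfolding H_def by (rule hit_step[OF x0])
  have sub_un: "Ec s \<epsilon> \<subseteq> (space \<Omega> - I) \<union> ((\<Union>n. space \<Omega> - Gs n) \<union> (\<Union>k. H k))"
  proof
    fix \<omega> assume \<omega>: "\<omega> \<in> Ec s \<epsilon>"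
    then have \<omega>s: "\<omega> \<in> space \<Omega>" unfolding Ec_def by auto
    show "\<omega> \<in> (space \<Omega> - I) \<union> ((\<Union>n. space \<Omega> - Gs n) \<union> (\<Union>k. H k))"
    proof (cases "\<omega> \<in> I \<and> (\<forall>n. \<omega> \<in> Gs n)")
      case True
      then have "infinite {n. Xn n \<omega> \<in> W}" unfolding I_def by simp
      then obtain n where n: "Xn n \<omega> \<in> W" using not_finite_existsD by blast
      have "Sn n \<omega> \<in> G" using True unfolding Gs_def by simp
      then have "(Xn n \<omega>, Sn n \<omega>) \<in> Z0 s \<epsilon>" using inZ0 n by blast
      then have "\<omega> !! n \<in> Z0 s \<epsilon>" by (simp add: Xn_def Sn_def)
      then have "\<omega> \<in> H n" unfolding H_def using \<omega> \<omega>s by simp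
      then show ?thesis by blast
    next
      case False
      then show ?thesis using \<omega>s by blast
    qed
  qed
  have U1: "emeasure (L (x,0)) (\<Union>n. space \<Omega> - Gs n) = 0"
    by (rule emeasure_UN_eq_0) (use Gs0 Gs sets_L[OF x0] in auto)
  have U2: "emeasure (L (x,0)) (\<Union>k. H k) = 0"
    by (rule emeasure_UN_eq_0) (use H0 H sets_L[OF x0] in auto)
  have s1: "(\<Union>n. space \<Omega> - Gs n) \<in> sets (L (x,0))" "(\<Union>k. H k) \<in> sets (L (x,0))"
    "space \<Omega> - I \<in> sets (L (x,0))"
    using Gs H I sets_L[OF x0] by auto
  have "emeasure (L (x,0)) ((\<Union>n. space \<Omega> - Gs n) \<union> (\<Union>k. H k)) = 0"
    using emeasure_subadditive[OF s1(1,2)] U1 U2 by simp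
  then have "emeasure (L (x,0)) ((space \<Omega> - I) \<union> ((\<Union>n. space \<Omega> - Gs n) \<union> (\<Union>k. H k))) = 0"
    using emeasure_subadditive[OF s1(3) sets.Un[OF s1(1,2)]] I0 by simp
  then have "emeasure (L (x,0)) (Ec s \<epsilon>) = 0"
    using emeasure_mono[OF sub_un] s1 by (metis le_zero_eq sets.Un)
  then show ?thesis using prob1_iff[OF x0 Ev_sets] unfolding Ec_def by simp
qed

lemma emeasure_L0_meas[measurable]: "A \<in> sets \<Omega> \<Longrightarrow> (\<lambda>x. emeasure (L (x,0)) A) \<in> borel_measurable M"
  by (rule measurable_compose[OF measurable_prob_algebraD[OF L0_meas] measurable_emeasure_subprob_algebra])

lemma prob1_iff':
  assumes "prob_space Q" "sets Q = sets \<Omega>" "A \<in> sets \<Omega>"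
  shows "measure Q A = 1 \<longleftrightarrow> emeasure Q (space \<Omega> - A) = 0"
proof -
  interpret prob_space Q by fact
  have sp: "space Q = space \<Omega>" using assms(2) sets_eq_imp_space_eq by blast
  have A: "A \<in> events" using assms by simp
  have "emeasure Q (space \<Omega> - A) = ennreal (1 - measure Q A)"
    using prob_compl[OF A] emeasure_eq_measure sp by simp
  then have "emeasure Q (space \<Omega> - A) = 0 \<longleftrightarrow> 1 - prob A \<le> 0"
    by (simp add: ennreal_eq_0_iff)
  moreover have "prob A \<le> 1" by (rule prob_le_1)
  ultimately show ?thesis by linarith
qed

lemma init_law_props:
  assumes "prob_space \<mu>" "sets \<mu> = sets M"
  shows "prob_space (init_law L \<mu>)" "sets (init_law L \<mu>) = sets \<Omega>"
    "\<And>A. A \<in> sets \<Omega> \<Longrightarrow> emeasure (init_law L \<mu>) A = (\<integral>\<^sup>+ x. emeasure (L (x,0)) A \<partial>\<mu>)"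
proof -
  have mu: "\<mu> \<in> space (prob_algebra M)" using assms by (simp add: space_prob_algebra)
  show "prob_space (init_law L \<mu>)" unfolding init_law_def by (rule prob_space_bind'[OF mu L0_meas])
  show "sets (init_law L \<mu>) = sets \<Omega>" unfolding init_law_def by (rule sets_bind'[OF mu L0_meas])
  show "\<And>A. A \<in> sets \<Omega> \<Longrightarrow> emeasure (init_law L \<mu>) A = (\<integral>\<^sup>+ x. emeasure (L (x,0)) A \<partial>\<mu>)"
    unfolding init_law_def by (rule emeasure_bind_prob_algebra[OF mu L0_meas])
qed

lemma rec_set_iff:
  assumes "space Q = space \<Omega>"
  shows "rec_set G Q = G \<longleftrightarrow> (\<forall>s\<in>G. \<forall>\<epsilon>>0. measure Q (Ev s \<epsilon>) = 1)"
  unfolding rec_set_def Ev_def assms by auto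

lemma part_ii:
  assumes cl: "closed G" and sub: "\<forall>a\<in>G. \<forall>b\<in>G. a - b \<in> G"
    and latt: "\<forall>x\<in>space M. \<forall>n. measure (L (x,0)) {\<omega>\<in>space \<Omega>. Sn n \<omega> \<in> G} = 1"
    and pi: "prob_space \<pi>" "sets \<pi> = sets M"
    and harris: "\<forall>B\<in>sets M. measure \<pi> B > 0 \<longrightarrow>
        (\<forall>x\<in>space M. measure (L (x,0)) {\<omega>\<in>space \<Omega>. infinite {k. Xn k \<omega> \<in> B}} = 1)"
    and rec\<pi>: "\<forall>s\<in>G. \<forall>\<epsilon>>0. measure (init_law L \<pi>) (Ev s \<epsilon>) = 1"
  shows "\<forall>x\<in>space M. \<forall>s\<in>G. \<forall>\<epsilon>>0. measure (L (x,0)) (Ev s \<epsilon>) = 1"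
proof -
  interpret pi: prob_space \<pi> by (rule pi(1))
  have sp\<pi>: "space \<pi> = space M" using pi(2) sets_eq_imp_space_eq by blast
  have AEs: "AE x in \<pi>. emeasure (L (x,0)) (Ec s \<epsilon>) = 0" if s: "s \<in> G" and e: "\<epsilon> > 0" for s \<epsilon>
  proof -
    have "emeasure (init_law L \<pi>) (Ec s \<epsilon>) = 0"
      using rec\<pi> s e prob1_iff'[OF init_law_props(1,2)[OF pi] Ev_sets] unfolding Ec_def by simp
    then have "(\<integral>\<^sup>+ x. emeasure (L (x,0)) (Ec s \<epsilon>) \<partial>\<pi>) = 0"
      using init_law_props(3)[OF pi Ec_sets] by simp
    moreover have "(\<lambda>x. emeasure (L (x,0)) (Ec s \<epsilon>)) \<in> borel_measurable \<pi>"
      using measurable_cong_sets[OF pi(2) refl] emeasure_L0_meas[OF Ec_sets] by blast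
    ultimately show ?thesis using nn_integral_0_iff_AE by blast
  qed
  obtain D :: "(real^2) set" where D: "countable D" "\<And>X. open X \<Longrightarrow> X \<noteq> {} \<Longrightarrow> \<exists>d\<in>D. d \<in> X"
    by (rule countable_dense_setE) blast
  define c where "c q k = (SOME g. g \<in> G \<and> dist g q < 1 / Suc k)" for q :: "real^2" and k :: nat
  define B' where "B' = {x\<in>space M. \<forall>q\<in>D. \<forall>k::nat. (\<exists>g\<in>G. dist g q < 1 / Suc k) \<longrightarrow>
       emeasure (L (x,0)) (Ec (c q k) (1 / Suc k)) = 0}"
  have c: "c q k \<in> G \<and> dist (c q k) q < 1 / Suc k" if "\<exists>g\<in>G. dist g q < 1 / Suc k" for q k
    unfolding c_def by (rule someI_ex) (use that in blast)
  have B'_sets: "B' \<in> sets M"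
  proof -
    have [measurable]: "Measurable.pred M (\<lambda>x. emeasure (L (x,0)) (Ec (c q k) (1 / Suc k)) = 0)" for q k
      by measurable
    show ?thesis unfolding B'_def using D(1) by measurable
  qed
  have "AE x in \<pi>. \<forall>q\<in>D. \<forall>k::nat. (\<exists>g\<in>G. dist g q < 1 / Suc k) \<longrightarrow>
       emeasure (L (x,0)) (Ec (c q k) (1 / Suc k)) = 0"
  proof (subst AE_ball_countable[OF D(1)], intro ballI, subst AE_all_countable, intro allI)
    fix q k
    show "AE x in \<pi>. (\<exists>g\<in>G. dist g q < 1 / Suc k) \<longrightarrow> emeasure (L (x,0)) (Ec (c q k) (1 / Suc k)) = 0"
    proof (cases "\<exists>g\<in>G. dist g q < 1 / Suc k")
      case True
      then show ?thesis using AEs[of "c q k" "1 / Suc k"] c[OF True] by auto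
    qed simp
  qed
  from this AE_space[of \<pi>] have AEB: "AE x in \<pi>. x \<in> B'"
    by eventually_elim (auto simp: B'_def sp\<pi>)
  have "measure \<pi> B' = 1"
  proof -
    have "B' \<in> pi.events" using B'_sets pi(2) by simp
    then show ?thesis using pi.prob_eq_1[of B'] AEB by simp
  qed
  then have posB: "measure \<pi> B' > 0" by simp
  have hitB: "\<forall>x\<in>space M. measure (L (x,0)) {\<omega>\<in>space \<Omega>. infinite {k. Xn k \<omega> \<in> B'}} = 1"
    using harris B'_sets posB by blast
  have goodB: "\<forall>y\<in>B'. \<forall>s\<in>G. \<forall>\<epsilon>>0. measure (L (y,0)) (Ev s \<epsilon>) = 1"
  proof (intro ballI allI impI)
    fix y s and \<epsilon> :: real assume y: "y \<in> B'" and s: "s \<in> G" and e: "\<epsilon> > 0"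
    have yM: "y \<in> space M" using y B'_def by simp
    have y0: "(y,0) \<in> space N" using yM by (rule x0_space)
    obtain k :: nat where k0: "3 / \<epsilon> < real k"
      using reals_Archimedean2[of "3 / \<epsilon>"] by blast
    have k: "3 / \<epsilon> < real (Suc k)" using k0 by simp
    define \<delta> where "\<delta> = 1 / real (Suc k)"
    have \<delta>: "\<delta> > 0" "3 * \<delta> < \<epsilon>" using k e unfolding \<delta>_def by (auto simp: field_simps)
    have "ball s \<delta> \<noteq> {}" using \<delta>(1) centre_in_ball by blast
    then obtain q where q: "q \<in> D" "q \<in> ball s \<delta>" using D(2)[OF open_ball] by blast
    have ex: "\<exists>g\<in>G. dist g q < 1 / Suc k" using s q(2) unfolding \<delta>_def by (auto simp: dist_commute)
    note cq = c[OF ex]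
    have zero: "emeasure (L (y,0)) (Ec (c q k) \<delta>) = 0"
      using y q(1) ex unfolding B'_def \<delta>_def by auto
    have "Ev (c q k) \<delta> \<subseteq> Ev s \<epsilon>"
    proof
      fix \<omega> assume "\<omega> \<in> Ev (c q k) \<delta>"
      then have \<omega>: "\<omega> \<in> space \<Omega>" "infinite {n. norm (Sn n \<omega> - c q k) < \<delta>}" unfolding Ev_def by auto
      have "{n. norm (Sn n \<omega> - c q k) < \<delta>} \<subseteq> {n. norm (Sn n \<omega> - s) < \<epsilon>}"
      proof
        fix n assume "n \<in> {n. norm (Sn n \<omega> - c q k) < \<delta>}"
        then have a: "dist (Sn n \<omega>) (c q k) < \<delta>" by (simp add: dist_norm)
        have b: "dist (c q k) q < \<delta>" using cq unfolding \<delta>_def by simp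
        have d: "dist q s < \<delta>" using q(2) by (simp add: dist_commute)
        have "dist (Sn n \<omega>) s \<le> dist (Sn n \<omega>) (c q k) + dist (c q k) q + dist q s"
          using dist_triangle[of "Sn n \<omega>" s "c q k"] dist_triangle[of "c q k" s q] by linarith
        then have "dist (Sn n \<omega>) s < \<epsilon>" using a b d \<delta> by linarith
        then show "n \<in> {n. norm (Sn n \<omega> - s) < \<epsilon>}" by (simp add: dist_norm)
      qed
      then have "infinite {n. norm (Sn n \<omega> - s) < \<epsilon>}" using \<omega>(2) infinite_super by blast
      then show "\<omega> \<in> Ev s \<epsilon>" using \<omega>(1) unfolding Ev_def by simp
    qed
    then have "Ec s \<epsilon> \<subseteq> Ec (c q k) \<delta>" unfolding Ec_def by blast
    then have "emeasure (L (y,0)) (Ec s \<epsilon>) \<le> emeasure (L (y,0)) (Ec (c q k) \<delta>)"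
      by (rule emeasure_mono) (simp add: sets_L[OF y0])
    then have "emeasure (L (y,0)) (Ec s \<epsilon>) = 0" using zero by simp
    then show "measure (L (y,0)) (Ev s \<epsilon>) = 1" using prob1_iff[OF y0 Ev_sets] unfolding Ec_def by simp
  qed
  show ?thesis
  proof (intro ballI allI impI)
    fix x s and \<epsilon> :: real assume x: "x \<in> space M" and s: "s \<in> G" and e: "\<epsilon> > 0"
    show "measure (L (x,0)) (Ev s \<epsilon>) = 1"
    proof (rule part_i'[OF x cl sub _ goodB _ _ s e])
      show "B' \<subseteq> space M" unfolding B'_def by blast
      show "\<forall>n. measure (L (x, 0)) {\<omega> \<in> space \<Omega>. Sn n \<omega> \<in> G} = 1" using latt x by blast
      show "measure (L (x, 0)) {\<omega> \<in> space \<Omega>. infinite {n. Xn n \<omega> \<in> B'}} = 1" using hitB x by blast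
    qed
  qed
qed

end

theorem mainTheorem8:
  fixes M :: "'a measure"
    and P :: "'a \<times> (real^2) \<Rightarrow> ('a \<times> (real^2)) measure"
    and L :: "'a \<times> (real^2) \<Rightarrow> ('a \<times> (real^2)) stream measure"
    and \<pi> :: "'a measure"
    and G :: "(real^2) set"
  assumes mrw: "MRW_kernel M P"
    and chain: "markov_law P (M \<Otimes>\<^sub>M borel) L"
    and inv: "invariant_prob M (drive_kernel M P) \<pi>"
    and integ: "integrable (init_law L \<pi>) (Sn 1)"
    and mean0: "(\<integral>\<omega>. Sn 1 \<omega> \<partial>init_law L \<pi>) = 0"
    and G: "closed_subgroup_2d G"
    and latt: "\<forall>x\<in>space M. \<forall>n. measure (init_law L (return M x))
                 {\<omega> \<in> space (init_law L (return M x)). Sn n \<omega> \<in> G} = 1"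
  defines "\<A> \<equiv> {x \<in> space M. rec_set G (init_law L (return M x)) = G}"
  shows "(\<forall>x\<in>space M.
            measure (init_law L (return M x))
              {\<omega> \<in> space (init_law L (return M x)). infinite {n. Xn n \<omega> \<in> \<A>}} = 1
            \<longrightarrow> x \<in> \<A>)
       \<and> (harris_recurrent M L \<pi> \<and> rec_set G (init_law L \<pi>) = G \<longrightarrow>
            \<A> = space M \<and>
            (\<forall>\<mu>. prob_space \<mu> \<and> sets \<mu> = sets M \<longrightarrow> rec_set G (init_law L \<mu>) = G))"
proof -
  interpret S: mrw_setup M P L using mrw chain by (rule mrw_setup.intro)
  let ?\<Omega> = "stream_space (M \<Otimes>\<^sub>M (borel :: (real^2) measure))"
  have cl: "closed G" and sub: "\<forall>a\<in>G. \<forall>b\<in>G. a - b \<in> G"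
    using G unfolding closed_subgroup_2d_def by auto
  have ir: "init_law L (return M x) = L (x,0)" if "x \<in> space M" for x
    using S.init_return that .
  have spx: "space (L (x,0)) = space ?\<Omega>" if "x \<in> space M" for x
    using S.space_L[OF S.x0_space[OF that]] .
  have latt': "\<forall>x\<in>space M. \<forall>n. measure (L (x,0)) {\<omega>\<in>space ?\<Omega>. Sn n \<omega> \<in> G} = 1"
    using latt ir spx by simp
  have A_eq: "\<A> = {x\<in>space M. \<forall>s\<in>G. \<forall>\<epsilon>>0. measure (L (x,0)) (S.Ev s \<epsilon>) = 1}"
    unfolding \<A>_def
  proof (rule Collect_cong, rule conj_cong[OF refl])
    fix x assume x: "x \<in> space M"
    show "(rec_set G (init_law L (return M x)) = G) = (\<forall>s\<in>G. \<forall>\<epsilon>>0. measure (L (x,0)) (S.Ev s \<epsilon>) = 1)"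
      unfolding ir[OF x] by (rule S.rec_set_iff[OF spx[OF x]])
  qed
  have AM: "\<A> \<subseteq> space M" unfolding \<A>_def by blast
  have Agood: "\<forall>y\<in>\<A>. \<forall>s\<in>G. \<forall>\<epsilon>>0. measure (L (y,0)) (S.Ev s \<epsilon>) = 1"
    using A_eq by blast
  have part1: "\<forall>x\<in>space M.
            measure (init_law L (return M x))
              {\<omega> \<in> space (init_law L (return M x)). infinite {n. Xn n \<omega> \<in> \<A>}} = 1
            \<longrightarrow> x \<in> \<A>"
  proof (intro ballI impI)
    fix x assume x: "x \<in> space M"
      and hyp: "measure (init_law L (return M x))
              {\<omega> \<in> space (init_law L (return M x)). infinite {n. Xn n \<omega> \<in> \<A>}} = 1"
    have hyp': "measure (L (x,0)) {\<omega> \<in> space ?\<Omega>. infinite {n. Xn n \<omega> \<in> \<A>}} = 1"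
      using hyp ir[OF x] spx[OF x] by simp
    have "\<forall>s\<in>G. \<forall>\<epsilon>>0. measure (L (x,0)) (S.Ev s \<epsilon>) = 1"
    proof (intro ballI allI impI)
      fix s and \<epsilon> :: real assume s: "s \<in> G" and e: "\<epsilon> > 0"
      show "measure (L (x,0)) (S.Ev s \<epsilon>) = 1"
        by (rule S.part_i'[OF x cl sub AM Agood _ hyp' s e]) (use latt' x in blast)
    qed
    then show "x \<in> \<A>" using A_eq x by blast
  qed
  have part2: "harris_recurrent M L \<pi> \<and> rec_set G (init_law L \<pi>) = G \<longrightarrow>
            \<A> = space M \<and>
            (\<forall>\<mu>. prob_space \<mu> \<and> sets \<mu> = sets M \<longrightarrow> rec_set G (init_law L \<mu>) = G)"
  proof (intro impI)
    assume H: "harris_recurrent M L \<pi> \<and> rec_set G (init_law L \<pi>) = G"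
    have pi: "prob_space \<pi>" "sets \<pi> = sets M" using inv unfolding invariant_prob_def by auto
    have harris: "\<forall>B\<in>sets M. measure \<pi> B > 0 \<longrightarrow>
        (\<forall>x\<in>space M. measure (L (x,0)) {\<omega>\<in>space ?\<Omega>. infinite {k. Xn k \<omega> \<in> B}} = 1)"
      using H ir spx unfolding harris_recurrent_def by simp
    have sp\<mu>: "space (init_law L \<mu>) = space ?\<Omega>" if "prob_space \<mu>" "sets \<mu> = sets M" for \<mu>
      using S.init_law_props(2)[OF that] sets_eq_imp_space_eq by blast
    have rec\<pi>: "\<forall>s\<in>G. \<forall>\<epsilon>>0. measure (init_law L \<pi>) (S.Ev s \<epsilon>) = 1"
      using H S.rec_set_iff[OF sp\<mu>[OF pi]] by blast
    have all: "\<forall>x\<in>space M. \<forall>s\<in>G. \<forall>\<epsilon>>0. measure (L (x,0)) (S.Ev s \<epsilon>) = 1"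
      by (rule S.part_ii[OF cl sub latt' pi harris rec\<pi>])
    have "\<A> = space M" using A_eq all by blast
    moreover have "rec_set G (init_law L \<mu>) = G" if mu: "prob_space \<mu>" "sets \<mu> = sets M" for \<mu>
    proof -
      have sp: "space \<mu> = space M" using mu(2) sets_eq_imp_space_eq by blast
      have "measure (init_law L \<mu>) (S.Ev s \<epsilon>) = 1" if s: "s \<in> G" and e: "\<epsilon> > 0" for s \<epsilon>
      proof -
        have "emeasure (init_law L \<mu>) (S.Ec s \<epsilon>) = (\<integral>\<^sup>+ x. emeasure (L (x,0)) (S.Ec s \<epsilon>) \<partial>\<mu>)"
          by (rule S.init_law_props(3)[OF mu S.Ec_sets])
        also have "\<dots> = (\<integral>\<^sup>+ x. 0 \<partial>\<mu>)"
        proof (rule nn_integral_cong)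
          fix x assume "x \<in> space \<mu>"
          then have x: "x \<in> space M" using sp by simp
          show "emeasure (L (x,0)) (S.Ec s \<epsilon>) = 0"
            using all x s e S.prob1_iff[OF S.x0_space[OF x] S.Ev_sets] unfolding S.Ec_def by blast
        qed
        finally have "emeasure (init_law L \<mu>) (S.Ec s \<epsilon>) = 0" by simp
        then show ?thesis
          using S.prob1_iff'[OF S.init_law_props(1,2)[OF mu] S.Ev_sets] unfolding S.Ec_def by blast
      qed
      then show ?thesis using S.rec_set_iff[OF sp\<mu>[OF mu]] by blast
    qed
    ultimately show "\<A> = space M \<and>
            (\<forall>\<mu>. prob_space \<mu> \<and> sets \<mu> = sets M \<longrightarrow> rec_set G (init_law L \<mu>) = G)" by blast
  qed
  show ?thesis using part1 part2 by blast
qed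

end
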